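(* Let $A_{\mathbbm{1}}$ be the matrix of the quadratic form $q_{\mathbbm{1}}$ on the space of polynomials of degree at most $1$ on $\mathbb{R}^{n(n-1)/2}$, in the monomial basis $\{1\}\cup\{x_{ij}\}$, where $\mathbbm{1}(x)=1$ for all $x\in X$; identify a polynomial of degree at most $1$ with its coefficient vector. Then for any $1\le i\le n$, $2-\sum_{j\ne i}x_{ij}$ is an eigenvector of $A_{\mathbbm{1}}$ with eigenvalue $0$, and for any distinct $\alpha,\beta,\gamma,\delta\in\{1,\dotsc,n\}$, $x_{\alpha\beta}-x_{\beta\gamma}+x_{\gamma\delta}-x_{\delta\alpha}$ is an eigenvector of $A_{\mathbbm{1}}$ with eigenvalue $\frac{2}{n-1}$.
   Context: Let $N=n(n-1)/2$, coordinates of $\mathbb{R}^N$ indexed by unordered pairs $\{i,j\}$ of distinct elements of $\{1,\dotsc,n\}$, written $x_{ij}=x_{ji}$. Let $X\subset\mathbb{R}^N$ be the set of incidence vectors of Hamiltonian cycles of $K_n$. For $f:X\to\mathbb{R}$, $q_f(h)=\frac{1}{|X|}\sum_{x\in X}f(x)h(x)^2$, and its matrix in the monomial basis has entry indexed by monomials $\mu,\nu$ equal to $\frac{1}{|X|}\sum_{x\in X}f(x)\mu(x)\nu(x)$. *)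

theory Defs
  imports Complex_Main
begin

text \<open>Coordinates of R^N are indexed by unordered pairs {i,j}, i \<noteq> j in {1..n},
  represented as two-element sets of naturals.\<close>

definition edges :: "nat \<Rightarrow> nat set set" where
  "edges n = {{i, j} | i j. i \<in> {1..n} \<and> j \<in> {1..n} \<and> i \<noteq> j}"

definition is_ham_cycle :: "nat \<Rightarrow> nat set set \<Rightarrow> bool" where
  "is_ham_cycle n C \<longleftrightarrow> 3 \<le> n \<and> (\<exists>vs. distinct vs \<and> set vs = {1..n} \<and>
      C = {{vs ! k, vs ! (Suc k mod n)} | k. k < n})"

definition incidence :: "nat set set \<Rightarrow> (nat set \<Rightarrow> real)" where
  "incidence C = (\<lambda>e. if e \<in> C then 1 else 0)"

text \<open>X: the set of incidence vectors of Hamiltonian cycles of K_n.\<close>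
definition HC :: "nat \<Rightarrow> (nat set \<Rightarrow> real) set" where
  "HC n = incidence ` {C. is_ham_cycle n C}"

text \<open>Monomials of degree at most 1: the empty set stands for the monomial 1,
  an edge {i,j} for the monomial x_ij.\<close>
definition monomials :: "nat \<Rightarrow> nat set set" where
  "monomials n = insert {} (edges n)"

definition mono_eval :: "nat set \<Rightarrow> (nat set \<Rightarrow> real) \<Rightarrow> real" where
  "mono_eval \<mu> x = (if \<mu> = {} then 1 else x \<mu>)"

definition qmat :: "nat \<Rightarrow> ((nat set \<Rightarrow> real) \<Rightarrow> real) \<Rightarrow> nat set \<Rightarrow> nat set \<Rightarrow> real" where
  "qmat n f \<mu> \<nu> = (1 / real (card (HC n))) * (\<Sum>x\<in>HC n. f x * mono_eval \<mu> x * mono_eval \<nu> x)"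

definition A_one :: "nat \<Rightarrow> nat set \<Rightarrow> nat set \<Rightarrow> real" where
  "A_one n = qmat n (\<lambda>_. 1)"

definition is_eigenvector :: "nat \<Rightarrow> (nat set \<Rightarrow> nat set \<Rightarrow> real) \<Rightarrow> (nat set \<Rightarrow> real) \<Rightarrow> real \<Rightarrow> bool" where
  "is_eigenvector n A v lam \<longleftrightarrow> (\<exists>\<mu>\<in>monomials n. v \<mu> \<noteq> 0) \<and>
     (\<forall>\<mu>\<in>monomials n. (\<Sum>\<nu>\<in>monomials n. A \<mu> \<nu> * v \<nu>) = lam * v \<mu>)"

text \<open>Coefficient vector of 2 - sum_{j \<noteq> i} x_ij.\<close>
definition vstar :: "nat \<Rightarrow> nat \<Rightarrow> nat set \<Rightarrow> real" where
  "vstar n i = (\<lambda>\<mu>. if \<mu> = {} then 2 else if \<mu> \<in> edges n \<and> i \<in> \<mu> then -1 else 0)"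

text \<open>Coefficient vector of x_ab - x_bc + x_cd - x_da.\<close>
definition vsquare :: "nat \<Rightarrow> nat \<Rightarrow> nat \<Rightarrow> nat \<Rightarrow> nat set \<Rightarrow> real" where
  "vsquare a b c d = (\<lambda>\<mu>. (if \<mu> = {a, b} then 1 else 0) - (if \<mu> = {b, c} then 1 else 0)
      + (if \<mu> = {c, d} then 1 else 0) - (if \<mu> = {d, a} then 1 else 0))"

end

theory Submission imports Defs begin

definition sw :: "nat \<Rightarrow> nat \<Rightarrow> nat \<Rightarrow> nat" where
  "sw a b x = (if x = a then b else if x = b then a else x)"

lemma sw_sw[simp]: "sw a b (sw a b x) = x" by (simp add: sw_def)
lemma inj_sw: "inj (sw a b)" by (metis injI sw_sw)
lemma sw_in: "a \<in> {1..n} \<Longrightarrow> b \<in> {1..n} \<Longrightarrow> x \<in> {1..n} \<Longrightarrow> sw a b x \<in> {1..n}"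
  by (simp add: sw_def)
lemma sw_img: "a \<in> {1..n} \<Longrightarrow> b \<in> {1..n} \<Longrightarrow> sw a b ` {1..n} = {1..n}"
proof (rule equalityI)
  assume a: "a \<in> {1..n}" "b \<in> {1..n}"
  show "sw a b ` {1..n} \<subseteq> {1..n}" using a sw_in by blast
  show "{1..n} \<subseteq> sw a b ` {1..n}"
  proof
    fix x assume x: "x \<in> {1..n}"
    have "x = sw a b (sw a b x)" by simp
    then show "x \<in> sw a b ` {1..n}" using sw_in[OF a x] by blast
  qed
qed
lemma img_img_sw[simp]: "sw a b ` (sw a b ` e) = e" by (simp add: image_image)
lemma mem_img_sw: "(e \<in> image (sw a b) ` C) = (sw a b ` e \<in> C)"
proof
  assume "e \<in> image (sw a b) ` C"
  then obtain D where "D \<in> C" "e = sw a b ` D" by blast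
  then show "sw a b ` e \<in> C" by simp
next
  assume "sw a b ` e \<in> C"
  then have "sw a b ` (sw a b ` e) \<in> image (sw a b) ` C" by blast
  then show "e \<in> image (sw a b) ` C" by simp
qed
lemma sw_fix: "a \<notin> e \<Longrightarrow> b \<notin> e \<Longrightarrow> sw a b ` e = e"
  by (force simp: sw_def)

lemma suc_mod: "k < n \<Longrightarrow> Suc k mod n = (if k = n - 1 then 0 else Suc k)"
  by auto

lemma ham_len: "distinct vs \<Longrightarrow> set vs = {1..n} \<Longrightarrow> length vs = n"
  by (metis card_atLeastAtMost diff_Suc_1 distinct_card)

lemma ham_sw:
  assumes "is_ham_cycle n C" "a \<in> {1..n}" "b \<in> {1..n}"
  shows "is_ham_cycle n (image (sw a b) ` C)"
proof -
  obtain vs where d: "distinct vs" and s: "set vs = {1..n}" and n: "3 \<le> n"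
    and C: "C = {{vs ! k, vs ! (Suc k mod n)} | k. k < n}"
    using assms(1) unfolding is_ham_cycle_def by blast
  have len: "length vs = n" using ham_len d s by blast
  let ?ws = "map (sw a b) vs"
  have d': "distinct ?ws" using d inj_sw by (simp add: distinct_map inj_on_def)
  have s': "set ?ws = {1..n}" using s sw_img[OF assms(2,3)] by simp
  have C': "C = (\<lambda>k. {vs ! k, vs ! (Suc k mod n)}) ` {..<n}" unfolding C by blast
  have e1: "image (sw a b) ` C = (\<lambda>k. {?ws ! k, ?ws ! (Suc k mod n)}) ` {..<n}"
    unfolding C' image_image
  proof (rule image_cong[OF refl])
    fix k assume k: "k \<in> {..<n}"
    then have "Suc k mod n < n" by simp
    then show "sw a b ` {vs ! k, vs ! (Suc k mod n)} = {?ws ! k, ?ws ! (Suc k mod n)}"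
      using k len by simp
  qed
  have e2: "(\<lambda>k. {?ws ! k, ?ws ! (Suc k mod n)}) ` {..<n} = {{?ws ! k, ?ws ! (Suc k mod n)} | k. k < n}"
    by blast
  have eq: "image (sw a b) ` C = {{?ws ! k, ?ws ! (Suc k mod n)} | k. k < n}"
    using e1 e2 by simp
  show ?thesis unfolding is_ham_cycle_def
    using n d' s' eq by (intro conjI exI[of _ ?ws]) assumption+
qed

definition Hs :: "nat \<Rightarrow> nat set set set" where "Hs n = {C. is_ham_cycle n C}"

lemma Hs_sub: "Hs n \<subseteq> Pow (Pow {1..n})"
proof
  fix C assume "C \<in> Hs n"
  then obtain vs where d: "distinct vs" and s: "set vs = {1..n}" and n: "3 \<le> n"
    and C: "C = {{vs ! k, vs ! (Suc k mod n)} | k. k < n}"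
    unfolding is_ham_cycle_def Hs_def by blast
  have len: "length vs = n" using ham_len d s by blast
  have "\<And>k. k < n \<Longrightarrow> {vs ! k, vs ! (Suc k mod n)} \<subseteq> {1..n}"
  proof -
    fix k assume k: "k < n"
    then have "Suc k mod n < n" by simp
    then show "{vs ! k, vs ! (Suc k mod n)} \<subseteq> {1..n}" using k len s nth_mem by blast
  qed
  then show "C \<in> Pow (Pow {1..n})" unfolding C by blast
qed

lemma finite_Hs: "finite (Hs n)"
  by (rule finite_subset[OF Hs_sub]) simp

lemma Hs_ne: "3 \<le> n \<Longrightarrow> Hs n \<noteq> {}"
proof -
  assume n: "3 \<le> n"
  have "is_ham_cycle n {{[1..<n+1] ! k, [1..<n+1] ! (Suc k mod n)} | k. k < n}"
    unfolding is_ham_cycle_def using n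
    by (intro conjI exI[of _ "[1..<n+1]"]) auto
  then show ?thesis unfolding Hs_def by blast
qed

lemma C_edges: "C \<in> Hs n \<Longrightarrow> C \<subseteq> edges n"
proof
  fix e assume "C \<in> Hs n" "e \<in> C"
  then obtain vs where d: "distinct vs" and s: "set vs = {1..n}" and n: "3 \<le> n"
    and C: "C = {{vs ! k, vs ! (Suc k mod n)} | k. k < n}"
    unfolding is_ham_cycle_def Hs_def by blast
  have len: "length vs = n" using ham_len d s by blast
  obtain k where k: "k < n" "e = {vs ! k, vs ! (Suc k mod n)}" using \<open>e \<in> C\<close> C by blast
  have k2: "Suc k mod n < n" using k by simp
  have ne: "k \<noteq> Suc k mod n" using k n suc_mod[OF k(1)] by auto
  have "vs ! k \<noteq> vs ! (Suc k mod n)" using nth_eq_iff_index_eq[OF d] k len k2 ne by simp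
  moreover have "vs ! k \<in> {1..n}" "vs ! (Suc k mod n) \<in> {1..n}" using s len k k2 nth_mem by blast+
  ultimately show "e \<in> edges n" unfolding edges_def using k by blast
qed

lemma deg:
  assumes "C \<in> Hs n" "i \<in> {1..n}"
  shows "card {j \<in> {1..n} - {i}. {i, j} \<in> C} = 2"
proof -
  obtain vs where d: "distinct vs" and s: "set vs = {1..n}" and n: "3 \<le> n"
    and C: "C = {{vs ! k, vs ! (Suc k mod n)} | k. k < n}"
    using assms(1) unfolding is_ham_cycle_def Hs_def by blast
  have len: "length vs = n" using ham_len d s by blast
  obtain k0 where k0: "k0 < n" "vs ! k0 = i" using assms(2) s len by (metis in_set_conv_nth)
  define sc where "sc = (if k0 = n - 1 then 0 else Suc k0)"
  define p where "p = (if k0 = 0 then n - 1 else k0 - 1)"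
  have inj: "\<And>x y. x < n \<Longrightarrow> y < n \<Longrightarrow> vs ! x = vs ! y \<longleftrightarrow> x = y"
    using nth_eq_iff_index_eq[OF d] len by simp
  have sc: "sc < n" "sc \<noteq> k0" "Suc k0 mod n = sc" using k0 n suc_mod[OF k0(1)] unfolding sc_def by auto
  have p: "p < n" "p \<noteq> k0" "Suc p mod n = k0" "p \<noteq> sc"
    using k0 n suc_mod[of p n] unfolding p_def sc_def by auto
  have mem: "\<And>m. m < n \<Longrightarrow> vs ! m \<in> {1..n}" using s len nth_mem by blast
  have eq: "{j \<in> {1..n} - {i}. {i, j} \<in> C} = {vs ! sc, vs ! p}"
  proof (rule equalityI; rule subsetI)
    fix j assume "j \<in> {j \<in> {1..n} - {i}. {i, j} \<in> C}"
    then have j: "j \<noteq> i" "{i, j} \<in> C" by auto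
    then obtain k where k: "k < n" "{i, j} = {vs ! k, vs ! (Suc k mod n)}" using C by blast
    have k2: "Suc k mod n < n" using k by simp
    from k(2) j(1) have "(i = vs ! k \<and> j = vs ! (Suc k mod n)) \<or> (i = vs ! (Suc k mod n) \<and> j = vs ! k)"
      by (auto simp: doubleton_eq_iff)
    then show "j \<in> {vs ! sc, vs ! p}"
    proof
      assume h: "i = vs ! k \<and> j = vs ! (Suc k mod n)"
      then have "k = k0" using inj k0 k by metis
      then show ?thesis using h sc by simp
    next
      assume h: "i = vs ! (Suc k mod n) \<and> j = vs ! k"
      then have "Suc k mod n = k0" using inj k0 k2 by metis
      then have "k = p" using suc_mod[OF k(1)] k unfolding p_def by (auto split: if_splits)
      then show ?thesis using h by simp
    qed
  next
    fix j assume "j \<in> {vs ! sc, vs ! p}"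
    then show "j \<in> {j \<in> {1..n} - {i}. {i, j} \<in> C}"
    proof
      assume "j = vs ! sc"
      moreover have "{i, vs ! sc} \<in> C" unfolding C using k0 sc by blast
      moreover have "vs ! sc \<noteq> i" using inj sc k0 by metis
      ultimately show ?thesis using mem sc by auto
    next
      assume "j \<in> {vs ! p}"
      then have "j = vs ! p" by simp
      moreover have "{i, vs ! p} = {vs ! p, vs ! (Suc p mod n)}" using p k0 by auto
      then have "{i, vs ! p} \<in> C" unfolding C using p by blast
      moreover have "vs ! p \<noteq> i" using inj p k0 by metis
      ultimately show ?thesis using mem p by auto
    qed
  qed
  have "vs ! sc \<noteq> vs ! p" using inj sc p by metis
  then show ?thesis unfolding eq by simp
qed


definition S0 :: "nat \<Rightarrow> nat set \<Rightarrow> real" where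
  "S0 n e = (\<Sum>C\<in>Hs n. of_bool (e \<in> C))"
definition S2 :: "nat \<Rightarrow> nat set \<Rightarrow> nat set \<Rightarrow> real" where
  "S2 n e f = (\<Sum>C\<in>Hs n. of_bool (e \<in> C) * of_bool (f \<in> C))"

lemma sum_sw:
  assumes "a \<in> {1..n}" "b \<in> {1..n}"
  shows "sum g (Hs n) = sum (\<lambda>C. g (image (sw a b) ` C)) (Hs n)"
  by (rule sum.reindex_bij_witness[where i="\<lambda>C. image (sw a b) ` C" and j="\<lambda>C. image (sw a b) ` C"])
     (auto simp: Hs_def image_image intro: ham_sw[OF _ assms])

lemma S0_sw: "a \<in> {1..n} \<Longrightarrow> b \<in> {1..n} \<Longrightarrow> S0 n e = S0 n (sw a b ` e)"
  unfolding S0_def by (rule trans[OF sum_sw[of a n b]]) (simp_all add: mem_img_sw)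

lemma S2_sw: "a \<in> {1..n} \<Longrightarrow> b \<in> {1..n} \<Longrightarrow> S2 n e f = S2 n (sw a b ` e) (sw a b ` f)"
  unfolding S2_def by (rule trans[OF sum_sw[of a n b]]) (simp_all add: mem_img_sw)

lemma S2_same: "S2 n e e = S0 n e"
  unfolding S2_def S0_def by (rule sum.cong) auto

lemma S2_comm: "S2 n e f = S2 n f e"
  unfolding S2_def by (rule sum.cong) auto

lemma deg_sum:
  assumes "C \<in> Hs n" "i \<in> {1..n}"
  shows "(\<Sum>j\<in>{1..n} - {i}. (of_bool ({i, j} \<in> C) :: real)) = 2"
proof -
  have "({1..n} - {i}) \<inter> {j. {i, j} \<in> C} = {j \<in> {1..n} - {i}. {i, j} \<in> C}" by blast
  then show ?thesis using deg[OF assms] by simp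
qed

lemma Dgen:
  assumes "i \<in> {1..n}"
  shows "(\<Sum>j\<in>{1..n} - {i}. \<Sum>C\<in>Hs n. w C * (of_bool ({i, j} \<in> C) :: real)) = 2 * (\<Sum>C\<in>Hs n. w C)"
proof -
  have "(\<Sum>j\<in>{1..n} - {i}. \<Sum>C\<in>Hs n. w C * (of_bool ({i, j} \<in> C) :: real))
      = (\<Sum>C\<in>Hs n. \<Sum>j\<in>{1..n} - {i}. w C * (of_bool ({i, j} \<in> C) :: real))"
    by (rule sum.swap)
  also have "... = (\<Sum>C\<in>Hs n. w C * (\<Sum>j\<in>{1..n} - {i}. (of_bool ({i, j} \<in> C) :: real)))"
    by (simp only: sum_distrib_left)
  also have "... = (\<Sum>C\<in>Hs n. w C * 2)"
    by (rule sum.cong[OF refl]) (simp only: deg_sum[OF _ assms])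
  also have "... = 2 * (\<Sum>C\<in>Hs n. w C)" by (simp add: sum_distrib_left mult.commute)
  finally show ?thesis .
qed

lemma D0: "i \<in> {1..n} \<Longrightarrow> (\<Sum>j\<in>{1..n} - {i}. S0 n {i, j}) = 2 * real (card (Hs n))"
  using Dgen[of i n "\<lambda>_. 1"] unfolding S0_def by simp

lemma D1: "i \<in> {1..n} \<Longrightarrow> (\<Sum>j\<in>{1..n} - {i}. S2 n e {i, j}) = 2 * S0 n e"
  using Dgen[of i n "\<lambda>C. of_bool (e \<in> C)"] unfolding S0_def S2_def by (simp del: sum_of_bool_mult_eq sum_mult_of_bool_eq)

lemma E0:
  assumes "a \<in> {1..n}" "b \<in> {1..n}" "a \<noteq> b"
  shows "(real n - 1) * S0 n {a, b} = 2 * real (card (Hs n))"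
proof -
  have "(\<Sum>j\<in>{1..n} - {a}. S0 n {a, j}) = (\<Sum>j\<in>{1..n} - {a}. S0 n {a, b})"
  proof (rule sum.cong[OF refl])
    fix j assume j: "j \<in> {1..n} - {a}"
    then have "S0 n {a, j} = S0 n (sw j b ` {a, j})" using S0_sw[of j n b] assms by blast
    also have "sw j b ` {a, j} = {a, b}" using j assms by (auto simp: sw_def)
    finally show "S0 n {a, j} = S0 n {a, b}" .
  qed
  moreover have "card ({1..n} - {a}) = n - 1" using assms by simp
  moreover have "n \<ge> 1" using assms by simp
  ultimately show ?thesis using D0[OF assms(1)] by (simp add: of_nat_diff)
qed

lemma E1:
  assumes "a \<in> {1..n}" "b \<in> {1..n}" "d \<in> {1..n}" "distinct [a, b, d]"
  shows "(real n - 2) * S2 n {a, b} {a, d} = S0 n {a, b}"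
proof -
  have split: "{1..n} - {a} = insert b ({1..n} - {a, b})" using assms by auto
  have "(\<Sum>j\<in>{1..n} - {a, b}. S2 n {a, b} {a, j}) = (\<Sum>j\<in>{1..n} - {a, b}. S2 n {a, b} {a, d})"
  proof (rule sum.cong[OF refl])
    fix j assume j: "j \<in> {1..n} - {a, b}"
    then have "S2 n {a, b} {a, j} = S2 n (sw j d ` {a, b}) (sw j d ` {a, j})" using S2_sw[of j n d] assms by blast
    also have "sw j d ` {a, b} = {a, b}" using j assms by (auto simp: sw_def)
    also have "sw j d ` {a, j} = {a, d}" using j assms by (auto simp: sw_def)
    finally show "S2 n {a, b} {a, j} = S2 n {a, b} {a, d}" .
  qed
  moreover have "card ({1..n} - {a, b}) = n - 2" using assms by (simp add: card_Diff_subset)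
  moreover have "n \<ge> 2" using assms
    by (metis card_atLeastAtMost diff_Suc_1 card_mono finite_atLeastAtMost insert_subset empty_subsetI
        distinct_length_2_or_more card_2_iff)
  ultimately show ?thesis using D1[OF assms(1), of "{a, b}"] assms unfolding split
    by (simp add: of_nat_diff S2_same algebra_simps)
qed


lemma n4:
  fixes n :: nat
  assumes "a \<in> {1..n}" "b \<in> {1..n}" "c \<in> {1..n}" "d \<in> {1..n}" "distinct [a, b, c, d]"
  shows "4 \<le> n"
proof -
  have "card {a, b, c, d} = 4" using assms(5) by simp
  moreover have "card {a, b, c, d} \<le> card {1..n}" using assms by (intro card_mono) auto
  ultimately show ?thesis by simp
qed

lemma E2:
  assumes "a \<in> {1..n}" "b \<in> {1..n}" "c \<in> {1..n}" "d \<in> {1..n}" "distinct [a, b, c, d]"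
  shows "(real n - 3) * S2 n {a, b} {c, d} + S2 n {a, b} {c, a} + S2 n {a, b} {c, b} = 2 * S0 n {a, b}"
proof -
  have split: "{1..n} - {c} = insert a (insert b ({1..n} - {a, b, c}))" using assms by auto
  have "(\<Sum>j\<in>{1..n} - {a, b, c}. S2 n {a, b} {c, j}) = (\<Sum>j\<in>{1..n} - {a, b, c}. S2 n {a, b} {c, d})"
  proof (rule sum.cong[OF refl])
    fix j assume j: "j \<in> {1..n} - {a, b, c}"
    then have "S2 n {a, b} {c, j} = S2 n (sw j d ` {a, b}) (sw j d ` {c, j})" using S2_sw[of j n d] assms by blast
    also have "sw j d ` {a, b} = {a, b}" using j assms by (auto simp: sw_def)
    also have "sw j d ` {c, j} = {c, d}" using j assms by (auto simp: sw_def)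
    finally show "S2 n {a, b} {c, j} = S2 n {a, b} {c, d}" .
  qed
  moreover have "card ({1..n} - {a, b, c}) = n - 3" using assms by (simp add: card_Diff_subset)
  moreover have "n \<ge> 4" using n4[OF assms] .
  ultimately show ?thesis using D1[OF assms(3), of "{a, b}"] assms unfolding split
    by (simp add: of_nat_diff algebra_simps)
qed

lemma Kval:
  assumes "a \<in> {1..n}" "b \<in> {1..n}" "c \<in> {1..n}" "d \<in> {1..n}" "distinct [a, b, c, d]"
  shows "S2 n {a, b} {a, b} - S2 n {a, b} {b, c} + S2 n {a, b} {c, d} - S2 n {a, b} {d, a}
         = 2 * real (card (Hs n)) / (real n - 1)"
proof -
  have n: "4 \<le> n" using n4[OF assms] .
  define p where "p = S0 n {a, b}"
  define q where "q = S2 n {a, b} {a, c}"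
  define q2 where "q2 = S2 n {a, b} {b, c}"
  define q3 where "q3 = S2 n {a, b} {a, d}"
  define r where "r = S2 n {a, b} {c, d}"
  have hp: "(real n - 1) * p = 2 * real (card (Hs n))" unfolding p_def using E0[of a n b] assms by simp
  have hq: "(real n - 2) * q = p" unfolding p_def q_def using E1[of a n b c] assms by simp
  have hq2: "(real n - 2) * q2 = p" unfolding p_def q2_def using E1[of b n a c] assms
    by (simp add: insert_commute)
  have hq3: "(real n - 2) * q3 = p" unfolding p_def q3_def using E1[of a n b d] assms by simp
  have hr: "(real n - 3) * r + q + q2 = 2 * p" unfolding p_def q_def q2_def r_def
    using E2[OF assms] by (simp add: insert_commute)
  have nz: "real n - 2 \<noteq> 0" "real n - 3 \<noteq> 0" "real n - 1 \<noteq> 0" using n by auto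
  have e1: "q2 = q" using hq hq2 nz by (metis mult_left_cancel)
  have e2: "q3 = q" using hq hq3 nz by (metis mult_left_cancel)
  have "(real n - 3) * r = (real n - 3) * (2 * q)" using hr hq e1 by (simp add: algebra_simps)
  then have er: "r = 2 * q" using nz by simp
  have pv: "p = 2 * real (card (Hs n)) / (real n - 1)" using hp nz by (simp add: field_simps)
  have "S2 n {a, b} {a, b} - S2 n {a, b} {b, c} + S2 n {a, b} {c, d} - S2 n {a, b} {d, a}
        = p - q2 + r - q3" unfolding p_def q2_def r_def q3_def by (simp add: S2_same insert_commute)
  also have "... = p" using e1 e2 er by simp
  finally show ?thesis using pv by simp
qed


lemma inj_incidence: "inj incidence"
proof (rule injI)
  fix C D assume h: "incidence C = incidence D"
  show "C = D"
  proof (rule set_eqI)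
    fix e have "incidence C e = incidence D e" using h by simp
    then show "e \<in> C \<longleftrightarrow> e \<in> D" by (simp add: incidence_def split: if_splits)
  qed
qed

lemma HC_img: "HC n = incidence ` Hs n" unfolding HC_def Hs_def by simp

lemma sum_HC: "sum g (HC n) = (\<Sum>C\<in>Hs n. g (incidence C))"
  unfolding HC_img using sum.reindex[OF inj_on_subset[OF inj_incidence subset_UNIV], of g "Hs n"] by simp

lemma card_HC: "card (HC n) = card (Hs n)"
  unfolding HC_img by (rule card_image) (rule inj_on_subset[OF inj_incidence], simp)

lemma inc_of_bool: "incidence C e = of_bool (e \<in> C)" by (simp add: incidence_def)

lemma edges_sub: "edges n \<subseteq> Pow {1..n}" unfolding edges_def by auto
lemma finite_mono: "finite (monomials n)"
  unfolding monomials_def using finite_subset[OF edges_sub] by simp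
lemma empty_not_edge: "{} \<notin> edges n" unfolding edges_def by auto
lemma mono_edge: "e \<in> edges n \<Longrightarrow> mono_eval e x = x e"
  using empty_not_edge unfolding mono_eval_def by auto
lemma edge_in: "a \<in> {1..n} \<Longrightarrow> b \<in> {1..n} \<Longrightarrow> a \<noteq> b \<Longrightarrow> {a, b} \<in> edges n"
  unfolding edges_def by blast

lemma eig_apply:
  "(\<Sum>\<nu>\<in>monomials n. A_one n \<mu> \<nu> * v \<nu>) = (1 / real (card (Hs n))) *
     (\<Sum>C\<in>Hs n. mono_eval \<mu> (incidence C) * (\<Sum>\<nu>\<in>monomials n. mono_eval \<nu> (incidence C) * v \<nu>))"
proof -
  let ?h = "real (card (Hs n))"
  let ?m = "\<lambda>\<nu> C. mono_eval \<nu> (incidence C)"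
  have "(\<Sum>\<nu>\<in>monomials n. A_one n \<mu> \<nu> * v \<nu>) =
        (\<Sum>\<nu>\<in>monomials n. (1 / ?h) * (\<Sum>C\<in>Hs n. ?m \<mu> C * ?m \<nu> C) * v \<nu>)"
    by (simp add: A_one_def qmat_def sum_HC card_HC)
  also have "... = (1 / ?h) * (\<Sum>\<nu>\<in>monomials n. \<Sum>C\<in>Hs n. ?m \<mu> C * (?m \<nu> C * v \<nu>))"
    by (simp add: sum_distrib_left sum_distrib_right mult.assoc)
  also have "... = (1 / ?h) * (\<Sum>C\<in>Hs n. \<Sum>\<nu>\<in>monomials n. ?m \<mu> C * (?m \<nu> C * v \<nu>))"
    by (subst sum.swap) (rule refl)
  also have "... = (1 / ?h) * (\<Sum>C\<in>Hs n. ?m \<mu> C * (\<Sum>\<nu>\<in>monomials n. ?m \<nu> C * v \<nu>))"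
    by (simp only: sum_distrib_left)
  finally show ?thesis .
qed

lemma Lstar:
  assumes C: "C \<in> Hs n" and i: "i \<in> {1..n}"
  shows "(\<Sum>\<nu>\<in>monomials n. mono_eval \<nu> (incidence C) * vstar n i \<nu>) = 0"
proof -
  have fe: "finite (edges n)" using finite_subset[OF edges_sub] by simp
  have CE: "C \<subseteq> edges n" using C_edges[OF C] .
  have fC: "finite C" using finite_subset[OF CE fe] .
  have "(\<Sum>\<nu>\<in>monomials n. mono_eval \<nu> (incidence C) * vstar n i \<nu>)
      = 2 + (\<Sum>e\<in>edges n. of_bool (e \<in> C) * (- of_bool (i \<in> e)))"
    unfolding monomials_def using fe empty_not_edge
    by (simp add: mono_eval_def vstar_def inc_of_bool del: sum_of_bool_mult_eq sum_mult_of_bool_eq)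
       (rule sum.cong, auto simp: incidence_def)
  also have "(\<Sum>e\<in>edges n. of_bool (e \<in> C) * (- of_bool (i \<in> e))) = - (\<Sum>e\<in>C. (of_bool (i \<in> e) :: real))"
  proof -
    have "edges n \<inter> {e. e \<in> C} = C" using CE by blast
    moreover have "(\<Sum>e\<in>edges n. of_bool (e \<in> C) * (of_bool (i \<in> e) :: real)) = (\<Sum>e\<in>edges n \<inter> {e. e \<in> C}. of_bool (i \<in> e))"
      by (rule sum_of_bool_mult_eq[OF fe])
    ultimately show ?thesis by (simp add: sum_negf del: sum_of_bool_mult_eq sum_mult_of_bool_eq)
  qed
  also have "(\<Sum>e\<in>C. (of_bool (i \<in> e) :: real)) = real (card (C \<inter> {e. i \<in> e}))"
    using fC by simp
  also have "C \<inter> {e. i \<in> e} = (\<lambda>j. {i, j}) ` {j \<in> {1..n} - {i}. {i, j} \<in> C}"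
  proof (rule equalityI; rule subsetI)
    fix e assume e: "e \<in> C \<inter> {e. i \<in> e}"
    then have "e \<in> edges n" using CE by blast
    then obtain x y where xy: "e = {x, y}" "x \<in> {1..n}" "y \<in> {1..n}" "x \<noteq> y" unfolding edges_def by blast
    show "e \<in> (\<lambda>j. {i, j}) ` {j \<in> {1..n} - {i}. {i, j} \<in> C}"
    proof (cases "i = x")
      case True then show ?thesis using xy e by blast
    next
      case False then have "i = y" using e xy by blast
      then have "e = {i, x}" using xy by blast
      then show ?thesis using xy e \<open>i = y\<close> by blast
    qed
  next
    fix e assume "e \<in> (\<lambda>j. {i, j}) ` {j \<in> {1..n} - {i}. {i, j} \<in> C}"
    then show "e \<in> C \<inter> {e. i \<in> e}" by blast
  qed
  also have "card ((\<lambda>j. {i, j}) ` {j \<in> {1..n} - {i}. {i, j} \<in> C}) = card {j \<in> {1..n} - {i}. {i, j} \<in> C}"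
    by (rule card_image) (auto simp: inj_on_def doubleton_eq_iff)
  also have "... = 2" using deg[OF C i] .
  finally show ?thesis by simp
qed

lemma delta_sum: "finite M \<Longrightarrow> e \<in> M \<Longrightarrow> (\<Sum>\<nu>\<in>M. g \<nu> * (if \<nu> = e then 1 else 0)) = (g e :: real)"
proof -
  assume "finite M" "e \<in> M"
  have "(\<Sum>\<nu>\<in>M. g \<nu> * (if \<nu> = e then 1 else 0)) = (\<Sum>\<nu>\<in>M. if \<nu> = e then g \<nu> else 0)"
    by (rule sum.cong) auto
  then show ?thesis using \<open>finite M\<close> \<open>e \<in> M\<close> by simp
qed

lemma Lsq:
  assumes "a \<in> {1..n}" "b \<in> {1..n}" "c \<in> {1..n}" "d \<in> {1..n}" "distinct [a, b, c, d]"
  shows "(\<Sum>\<nu>\<in>monomials n. mono_eval \<nu> x * vsquare a b c d \<nu>)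
         = x {a, b} - x {b, c} + x {c, d} - x {d, a}"
proof -
  have E: "{a, b} \<in> edges n" "{b, c} \<in> edges n" "{c, d} \<in> edges n" "{d, a} \<in> edges n"
    using assms by (auto intro!: edge_in)
  then have M: "{a, b} \<in> monomials n" "{b, c} \<in> monomials n" "{c, d} \<in> monomials n" "{d, a} \<in> monomials n"
    unfolding monomials_def by auto
  have "(\<Sum>\<nu>\<in>monomials n. mono_eval \<nu> x * vsquare a b c d \<nu>)
     = (\<Sum>\<nu>\<in>monomials n. mono_eval \<nu> x * (if \<nu> = {a, b} then 1 else 0))
     - (\<Sum>\<nu>\<in>monomials n. mono_eval \<nu> x * (if \<nu> = {b, c} then 1 else 0))
     + (\<Sum>\<nu>\<in>monomials n. mono_eval \<nu> x * (if \<nu> = {c, d} then 1 else 0))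
     - (\<Sum>\<nu>\<in>monomials n. mono_eval \<nu> x * (if \<nu> = {d, a} then 1 else 0))"
    unfolding vsquare_def by (simp only: right_diff_distrib distrib_left sum.distrib sum_subtractf)
  also have "... = mono_eval {a, b} x - mono_eval {b, c} x + mono_eval {c, d} x - mono_eval {d, a} x"
    using M finite_mono by (simp only: delta_sum)
  finally show ?thesis using E by (simp add: mono_edge)
qed


lemma Fval:
  assumes "a \<in> {1..n}" "b \<in> {1..n}" "c \<in> {1..n}" "d \<in> {1..n}" "distinct [a, b, c, d]"
    and e: "e \<in> {{a, b}, {b, c}, {c, d}, {d, a}}"
  shows "S2 n e {a, b} - S2 n e {b, c} + S2 n e {c, d} - S2 n e {d, a}
         = 2 * real (card (Hs n)) / (real n - 1) * vsquare a b c d e"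
proof -
  have K1: "S2 n {a, b} {a, b} - S2 n {a, b} {b, c} + S2 n {a, b} {c, d} - S2 n {a, b} {d, a}
         = 2 * real (card (Hs n)) / (real n - 1)" using Kval[of a n b c d] assms by simp
  have K2: "S2 n {b, c} {b, c} - S2 n {b, c} {c, d} + S2 n {b, c} {d, a} - S2 n {b, c} {a, b}
         = 2 * real (card (Hs n)) / (real n - 1)" using Kval[of b n c d a] assms by auto
  have K3: "S2 n {c, d} {c, d} - S2 n {c, d} {d, a} + S2 n {c, d} {a, b} - S2 n {c, d} {b, c}
         = 2 * real (card (Hs n)) / (real n - 1)" using Kval[of c n d a b] assms by auto
  have K4: "S2 n {d, a} {d, a} - S2 n {d, a} {a, b} + S2 n {d, a} {b, c} - S2 n {d, a} {c, d}
         = 2 * real (card (Hs n)) / (real n - 1)" using Kval[of d n a b c] assms by auto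
  from e show ?thesis
  proof (elim insertE emptyE)
    assume "e = {a, b}" then show ?thesis using K1 assms by (simp add: vsquare_def doubleton_eq_iff)
  next
    assume "e = {b, c}" then show ?thesis using K2 assms by (simp add: vsquare_def doubleton_eq_iff)
  next
    assume "e = {c, d}" then show ?thesis using K3 assms by (simp add: vsquare_def doubleton_eq_iff)
  next
    assume "e = {d, a}" then show ?thesis using K4 assms by (simp add: vsquare_def doubleton_eq_iff)
  qed
qed

lemma part2:
  assumes n3: "3 \<le> n"
  assumes ab: "a \<in> {1..n}" "b \<in> {1..n}" "c \<in> {1..n}" "d \<in> {1..n}" "distinct [a, b, c, d]"
  shows "is_eigenvector n (A_one n) (vsquare a b c d) (2 / (real n - 1))"
  unfolding is_eigenvector_def
proof (intro conjI ballI)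
  have h: "real (card (Hs n)) > 0" using Hs_ne[OF n3] finite_Hs card_gt_0_iff by auto
  have n4: "4 \<le> n" using n4[OF ab] .
  have "{a, b} \<in> monomials n" unfolding monomials_def using ab by (auto intro!: edge_in)
  moreover have "vsquare a b c d {a, b} \<noteq> 0" using ab by (simp add: vsquare_def doubleton_eq_iff)
  ultimately show "\<exists>\<mu>\<in>monomials n. vsquare a b c d \<mu> \<noteq> 0" by blast
  fix \<mu> assume \<mu>: "\<mu> \<in> monomials n"
  let ?h = "real (card (Hs n))"
  have eq: "(\<Sum>\<nu>\<in>monomials n. A_one n \<mu> \<nu> * vsquare a b c d \<nu>) = (1 / ?h) *
     (\<Sum>C\<in>Hs n. mono_eval \<mu> (incidence C) * (of_bool ({a, b} \<in> C) - of_bool ({b, c} \<in> C)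
        + of_bool ({c, d} \<in> C) - of_bool ({d, a} \<in> C)))"
    by (simp only: eig_apply Lsq[OF ab] inc_of_bool)
  show "(\<Sum>\<nu>\<in>monomials n. A_one n \<mu> \<nu> * vsquare a b c d \<nu>) = 2 / (real n - 1) * vsquare a b c d \<mu>"
  proof (cases "\<mu> = {}")
    case True
    have "(\<Sum>C\<in>Hs n. mono_eval \<mu> (incidence C) * (of_bool ({a, b} \<in> C) - of_bool ({b, c} \<in> C)
        + of_bool ({c, d} \<in> C) - of_bool ({d, a} \<in> C)))
        = S0 n {a, b} - S0 n {b, c} + S0 n {c, d} - S0 n {d, a}"
      unfolding S0_def True mono_eval_def
      by (simp only: if_P[OF refl] mult_1 sum.distrib sum_subtractf)
    also have "S0 n {a, b} = S0 n {b, c}"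
    proof -
      have "S0 n {a, b} = S0 n (sw a c ` {a, b})" using S0_sw[of a n c] ab by blast
      also have "sw a c ` {a, b} = {b, c}" using ab by (auto simp: sw_def)
      finally show ?thesis .
    qed
    also have "S0 n {c, d} = S0 n {d, a}"
    proof -
      have "S0 n {c, d} = S0 n (sw a c ` {c, d})" using S0_sw[of a n c] ab by blast
      also have "sw a c ` {c, d} = {d, a}" using ab by (auto simp: sw_def)
      finally show ?thesis .
    qed
    finally show ?thesis unfolding eq using True by (simp add: vsquare_def)
  next
    case False
    then have me: "\<mu> \<in> edges n" using \<mu> unfolding monomials_def by blast
    have "(\<Sum>C\<in>Hs n. mono_eval \<mu> (incidence C) * (of_bool ({a, b} \<in> C) - of_bool ({b, c} \<in> C)
        + of_bool ({c, d} \<in> C) - of_bool ({d, a} \<in> C)))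
        = S2 n \<mu> {a, b} - S2 n \<mu> {b, c} + S2 n \<mu> {c, d} - S2 n \<mu> {d, a}"
      unfolding S2_def mono_edge[OF me] inc_of_bool
      by (simp only: right_diff_distrib distrib_left sum.distrib sum_subtractf)
    also have "... = 2 * ?h / (real n - 1) * vsquare a b c d \<mu>"
    proof (cases "a \<notin> \<mu> \<and> c \<notin> \<mu>")
      case True
      have fx: "sw a c ` \<mu> = \<mu>" using True sw_fix by blast
      have 1: "S2 n \<mu> {a, b} = S2 n \<mu> {b, c}"
        using S2_sw[of a n c \<mu> "{a, b}"] ab fx by (simp add: sw_def insert_commute)
      have 2: "S2 n \<mu> {c, d} = S2 n \<mu> {d, a}"
        using S2_sw[of a n c \<mu> "{c, d}"] ab fx by (simp add: sw_def insert_commute)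
      have "\<mu> \<noteq> {a, b}" "\<mu> \<noteq> {b, c}" "\<mu> \<noteq> {c, d}" "\<mu> \<noteq> {d, a}" using True by auto
      then have "vsquare a b c d \<mu> = 0" by (simp add: vsquare_def)
      then show ?thesis using 1 2 by simp
    next
      case F1: False
      show ?thesis
      proof (cases "b \<notin> \<mu> \<and> d \<notin> \<mu>")
        case True
        have fx: "sw b d ` \<mu> = \<mu>" using True sw_fix by blast
        have 1: "S2 n \<mu> {a, b} = S2 n \<mu> {d, a}"
          using S2_sw[of b n d \<mu> "{a, b}"] ab fx by (simp add: sw_def insert_commute)
        have 2: "S2 n \<mu> {b, c} = S2 n \<mu> {c, d}"
          using S2_sw[of b n d \<mu> "{b, c}"] ab fx by (simp add: sw_def insert_commute)
        have "\<mu> \<noteq> {a, b}" "\<mu> \<noteq> {b, c}" "\<mu> \<noteq> {c, d}" "\<mu> \<noteq> {d, a}" using True by auto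
        then have "vsquare a b c d \<mu> = 0" by (simp add: vsquare_def)
        then show ?thesis using 1 2 by simp
      next
        case F2: False
        obtain x y where xy: "\<mu> = {x, y}" "x \<noteq> y" using me unfolding edges_def by blast
        have "\<mu> \<in> {{a, b}, {b, c}, {c, d}, {d, a}}" using F1 F2 xy ab by auto
        then show ?thesis using Fval[OF ab] by blast
      qed
    qed
    finally show ?thesis unfolding eq using h by (simp add: field_simps)
  qed
qed

theorem lemma4:
  fixes n :: nat
  assumes "3 \<le> n"
  shows "(\<forall>i\<in>{1..n}. is_eigenvector n (A_one n) (vstar n i) 0) \<and>
         (\<forall>a\<in>{1..n}. \<forall>b\<in>{1..n}. \<forall>c\<in>{1..n}. \<forall>d\<in>{1..n}.
            distinct [a, b, c, d] \<longrightarrow>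
            is_eigenvector n (A_one n) (vsquare a b c d) (2 / (real n - 1)))"
proof (intro conjI ballI impI)
  fix i assume i: "i \<in> {1..n}"
  show "is_eigenvector n (A_one n) (vstar n i) 0" unfolding is_eigenvector_def
  proof (intro conjI ballI)
    have "{} \<in> monomials n" by (simp add: monomials_def)
    then show "\<exists>\<mu>\<in>monomials n. vstar n i \<mu> \<noteq> 0" by (intro bexI[of _ "{}"]) (simp_all add: vstar_def)
    fix \<mu> assume "\<mu> \<in> monomials n"
    show "(\<Sum>\<nu>\<in>monomials n. A_one n \<mu> \<nu> * vstar n i \<nu>) = 0 * vstar n i \<mu>"
      unfolding eig_apply using Lstar[OF _ i] by simp
  qed
next
  fix a b c d assume "a \<in> {1..n}" "b \<in> {1..n}" "c \<in> {1..n}" "d \<in> {1..n}" "distinct [a, b, c, d]"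
  then show "is_eigenvector n (A_one n) (vsquare a b c d) (2 / (real n - 1))"
    using part2[OF assms] by blast
qed

end
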